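(* Let $n=2K$, let $m_1,\dots,m_n>0$ be fixed constants, and let $M=\{(x_1,\dots,x_n)\in\mathbb{R}^n: x_1<\dots<x_n\}$ carry the Poisson bracket determined by $\{x_i,x_k\}=\operatorname{sgn}(x_i-x_k)$, i.e. $\{f,g\}=\sum_{i,k}\operatorname{sgn}(x_i-x_k)\frac{\partial f}{\partial x_i}\frac{\partial g}{\partial x_k}$. Set $h_i=m_ie^{x_i}$, $g_i=m_ie^{-x_i}$ and $$H_j=\sum_{\substack{I,J\in\binom{[2K]}{j}\\ I<J}} h_I g_J,\qquad 1\le j\le K.$$ Then $\{H_i,H_j\}=0$ for all $1\le i,j\le K$.
   Context: $[k]=\{1,\dots,k\}$ and $\binom{[k]}{j}$ is the set of $j$-element subsets $I=\{i_1<\dots<i_j\}$ of $[k]$. For $I,J\in\binom{[k]}{j}$, $I<J$ (interlacing) means $i_1<j_1<i_2<j_2<\dots<i_j<j_j$. Also $h_I=h_{i_1}\cdots h_{i_j}$ and $g_J=g_{j_1}\cdots g_{j_j}$. (These $H_j$ are constants of motion of the conservative mCH peakon system $\dot x_j=2\sum_{k\ne j}m_jm_ke^{-|x_j-x_k|}+4\sum_{1\le i<j<k\le n}m_im_ke^{-|x_i-x_k|}$ on $M$.) *)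

theory Defs
  imports "HOL-Analysis.Analysis"
begin

text \<open>Points of R^n are functions x :: nat => real, of which only the
coordinates x 1, ..., x n matter.\<close>

definition partial :: "((nat \<Rightarrow> real) \<Rightarrow> real) \<Rightarrow> nat \<Rightarrow> (nat \<Rightarrow> real) \<Rightarrow> real" where
  "partial f i x = deriv (\<lambda>t. f (x(i := t))) (x i)"

definition pbracket :: "nat \<Rightarrow> ((nat \<Rightarrow> real) \<Rightarrow> real) \<Rightarrow> ((nat \<Rightarrow> real) \<Rightarrow> real)
    \<Rightarrow> (nat \<Rightarrow> real) \<Rightarrow> real" where
  "pbracket n f g x = (\<Sum>i\<in>{1..n}. \<Sum>k\<in>{1..n}.
      sgn (x i - x k) * partial f i x * partial g k x)"

definition subsets_of :: "nat \<Rightarrow> nat \<Rightarrow> nat set set" where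
  "subsets_of k j = {I. I \<subseteq> {1..k} \<and> card I = j}"

definition interlace :: "nat set \<Rightarrow> nat set \<Rightarrow> bool" where
  "interlace I J = (let a = sorted_list_of_set I; b = sorted_list_of_set J; j = card I in
      card J = j \<and> (\<forall>r<j. a ! r < b ! r) \<and> (\<forall>r. r + 1 < j \<longrightarrow> b ! r < a ! (r + 1)))"

definition H :: "nat \<Rightarrow> (nat \<Rightarrow> real) \<Rightarrow> nat \<Rightarrow> (nat \<Rightarrow> real) \<Rightarrow> real" where
  "H K m j x = (\<Sum>(I, J) \<in> {(I, J). I \<in> subsets_of (2 * K) j \<and> J \<in> subsets_of (2 * K) j
        \<and> interlace I J}.
      (\<Prod>i\<in>I. m i * exp (x i)) * (\<Prod>l\<in>J. m l * exp (- x l)))"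

end

theory Submission
  imports Defs
begin


definition cnt :: "nat set \<Rightarrow> nat \<Rightarrow> nat" where
  "cnt I a = card {x\<in>I. x \<le> a}"

lemma cnt_nth:
  assumes "finite I" "r < card I"
  shows "(sorted_list_of_set I ! r \<le> a) \<longleftrightarrow> r < cnt I a"
proof -
  let ?A = "sorted_list_of_set I"
  have len: "length ?A = card I" by simp
  have dist: "distinct ?A" by simp
  have sor: "sorted ?A" by simp
  have setA: "set ?A = I" using assms by simp
  let ?R = "{r. r < card I \<and> ?A ! r \<le> a}"
  have img: "{x\<in>I. x \<le> a} = (\<lambda>r. ?A ! r) ` ?R"
  proof
    show "{x \<in> I. x \<le> a} \<subseteq> (!) ?A ` ?R"
    proof
      fix x assume "x \<in> {x \<in> I. x \<le> a}"
      then have "x \<in> set ?A" "x \<le> a" using setA by auto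
      then obtain i where "i < length ?A" "?A ! i = x" by (auto simp: in_set_conv_nth)
      then show "x \<in> (!) ?A ` ?R" using \<open>x \<le> a\<close> len by force
    qed
    show "(!) ?A ` ?R \<subseteq> {x \<in> I. x \<le> a}"
      using setA len by (auto intro!: nth_mem)
  qed
  have "inj_on (\<lambda>r. ?A ! r) ?R"
    using dist len by (auto simp: inj_on_def nth_eq_iff_index_eq)
  then have cR: "cnt I a = card ?R" unfolding cnt_def img by (simp add: card_image)
  show ?thesis
  proof
    assume h: "?A ! r \<le> a"
    have "{..r} \<subseteq> ?R"
    proof
      fix r' assume "r' \<in> {..r}"
      then have "r' \<le> r" by simp
      then have "?A ! r' \<le> ?A ! r" using sor assms len by (simp add: sorted_nth_mono)
      then show "r' \<in> ?R" using h \<open>r' \<le> r\<close> assms by auto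
    qed
    moreover have "finite ?R" by simp
    ultimately have "card {..r} \<le> card ?R" by (rule card_mono[rotated])
    then show "r < cnt I a" using cR by simp
  next
    assume h: "r < cnt I a"
    show "?A ! r \<le> a"
    proof (rule ccontr)
      assume "\<not> ?A ! r \<le> a"
      have "?R \<subseteq> {..<r}"
      proof
        fix r' assume r': "r' \<in> ?R"
        show "r' \<in> {..<r}"
        proof (rule ccontr)
          assume "r' \<notin> {..<r}"
          then have "r \<le> r'" by simp
          then have "?A ! r \<le> ?A ! r'" using sor r' len by (simp add: sorted_nth_mono)
          then show False using r' \<open>\<not> ?A ! r \<le> a\<close> by auto
        qed
      qed
      then have "card ?R \<le> r" using card_mono[of "{..<r}" ?R] by simp
      then show False using h cR by simp
    qed
  qed
qed



lemma interlace_imp: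
  assumes fI: "finite I" and fJ: "finite J" and il: "interlace I J"
  shows "cnt J a \<le> cnt I a \<and> cnt I a \<le> cnt J a + 1" and "I \<inter> J = {}"
proof -
  let ?A = "sorted_list_of_set I" and ?B = "sorted_list_of_set J"
  let ?j = "card I"
  have cJ: "card J = ?j" and lt1: "\<forall>r<?j. ?A ! r < ?B ! r"
    and lt2: "\<forall>r. r + 1 < ?j \<longrightarrow> ?B ! r < ?A ! (r + 1)"
    using il unfolding interlace_def Let_def by auto
  have pI: "cnt I a \<le> ?j" unfolding cnt_def using fI by (intro card_mono) auto
  have pJ: "cnt J a \<le> ?j" unfolding cnt_def using fJ cJ by (metis (no_types, lifting) card_mono mem_Collect_eq subsetI)
  show "cnt J a \<le> cnt I a \<and> cnt I a \<le> cnt J a + 1"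
  proof
    show "cnt J a \<le> cnt I a"
    proof (rule ccontr)
      assume "\<not> cnt J a \<le> cnt I a"
      then have h: "cnt I a < cnt J a" by simp
      let ?p = "cnt I a"
      have "?p < ?j" using h pJ by simp
      have "?B ! ?p \<le> a" using cnt_nth[OF fJ, of ?p a] h \<open>?p < ?j\<close> cJ by simp
      then have "?A ! ?p \<le> a" using lt1 \<open>?p < ?j\<close> by (meson less_imp_le order_trans)
      then show False using cnt_nth[OF fI \<open>?p < ?j\<close>] by simp
    qed
  next
    show "cnt I a \<le> cnt J a + 1"
    proof (rule ccontr)
      assume "\<not> cnt I a \<le> cnt J a + 1"
      let ?q = "cnt J a"
      have h: "?q + 1 < cnt I a" using \<open>\<not> cnt I a \<le> cnt J a + 1\<close> by simp
      have "?q + 1 < ?j" using h pI by simp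
      have "?A ! (?q+1) \<le> a" using cnt_nth[OF fI \<open>?q + 1 < ?j\<close>] h by simp
      then have "?B ! ?q \<le> a" using lt2 \<open>?q + 1 < ?j\<close> by (meson less_imp_le order_trans)
      moreover have "?q < card J" using \<open>?q + 1 < ?j\<close> cJ by simp
      ultimately show False using cnt_nth[OF fJ, of ?q a] by simp
    qed
  qed
  show "I \<inter> J = {}"
  proof (rule ccontr)
    assume "I \<inter> J \<noteq> {}"
    then obtain y where "y \<in> I" "y \<in> J" by blast
    then obtain r s where r: "r < ?j" "?A ! r = y" and s: "s < ?j" "?B ! s = y"
      using fI fJ cJ by (metis in_set_conv_nth length_sorted_list_of_set set_sorted_list_of_set)
    show False
    proof (cases "r \<le> s")
      case True
      have "?B ! r \<le> ?B ! s" using sorted_nth_mono[OF sorted_sorted_list_of_set[of J] True] s cJ by simp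
      then show ?thesis using lt1 r s by force
    next
      case False
      have "s + 1 \<le> r" using False by simp
      have "?A ! (s+1) \<le> ?A ! r" using sorted_nth_mono[OF sorted_sorted_list_of_set[of I] \<open>s + 1 \<le> r\<close>] r by simp
      moreover have "s + 1 < ?j" using False r by simp
      ultimately show ?thesis using lt2 r s by force
    qed
  qed
qed

lemma imp_interlace:
  assumes fI: "finite I" and fJ: "finite J" and cJ: "card J = card I" and dj: "I \<inter> J = {}"
    and c: "\<And>a. cnt J a \<le> cnt I a \<and> cnt I a \<le> cnt J a + 1"
  shows "interlace I J"
proof -
  let ?A = "sorted_list_of_set I" and ?B = "sorted_list_of_set J"
  let ?j = "card I"
  have memA: "r < ?j \<Longrightarrow> ?A ! r \<in> I" for r using fI
    by (metis length_sorted_list_of_set nth_mem set_sorted_list_of_set)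
  have memB: "r < ?j \<Longrightarrow> ?B ! r \<in> J" for r using fJ cJ
    by (metis length_sorted_list_of_set nth_mem set_sorted_list_of_set)
  have lt1: "?A ! r < ?B ! r" if "r < ?j" for r
  proof -
    have "r < cnt J (?B ! r)" using cnt_nth[OF fJ, of r "?B ! r"] that cJ by simp
    then have "r < cnt I (?B ! r)" using c[of "?B ! r"] by linarith
    then have "?A ! r \<le> ?B ! r" using cnt_nth[OF fI that] by simp
    moreover have "?A ! r \<noteq> ?B ! r" using memA memB that dj by force
    ultimately show ?thesis by simp
  qed
  have lt2: "?B ! r < ?A ! (r+1)" if "r + 1 < ?j" for r
  proof -
    have "r + 1 < cnt I (?A ! (r+1))" using cnt_nth[OF fI that, of "?A ! (r+1)"] by simp
    then have "r < cnt J (?A ! (r+1))" using c[of "?A ! (r+1)"] by linarith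
    then have "?B ! r \<le> ?A ! (r+1)" using cnt_nth[OF fJ, of r] that cJ by simp
    moreover have "?A ! (r+1) \<noteq> ?B ! r" using memA memB that dj by force
    ultimately show ?thesis by simp
  qed
  show ?thesis unfolding interlace_def Let_def using cJ lt1 lt2 by auto
qed



definition ps :: "(nat \<Rightarrow> int) \<Rightarrow> nat \<Rightarrow> int" where
  "ps v a = (\<Sum>b\<le>a. v b)"

definition Alt :: "nat \<Rightarrow> nat \<Rightarrow> (nat \<Rightarrow> int) set" where
  "Alt n j = {v. (\<forall>b. v b \<noteq> 0 \<longrightarrow> 1 \<le> b \<and> b \<le> n) \<and> (\<forall>a. ps v a \<in> {0,1}) \<and> ps v n = 0
      \<and> card {b\<in>{1..n}. v b = 1} = j}"

definition chi :: "nat set \<Rightarrow> nat set \<Rightarrow> nat \<Rightarrow> int" where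
  "chi I J = (\<lambda>b. (if b \<in> I then 1 else 0) - (if b \<in> J then 1 else 0))"

definition Pairs :: "nat \<Rightarrow> nat \<Rightarrow> (nat set \<times> nat set) set" where
  "Pairs n j = {(I, J). I \<in> subsets_of n j \<and> J \<in> subsets_of n j \<and> interlace I J}"

lemma sum_ind_cnt: "finite I \<Longrightarrow> (\<Sum>b\<le>a. if b \<in> I then 1 else 0::int) = int (cnt I a)"
proof -
  assume "finite I"
  have "(\<Sum>b\<le>a. if b \<in> I then 1 else 0::int) = (\<Sum>b\<in>{b\<in>{..a}. b \<in> I}. 1)"
    using sum.inter_filter[of "{..a}" "\<lambda>_. 1::int" "\<lambda>b. b\<in>I"] by simp
  also have "{b\<in>{..a}. b \<in> I} = {x\<in>I. x \<le> a}" by auto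
  finally show ?thesis unfolding cnt_def by simp
qed

lemma ps_chi: "finite I \<Longrightarrow> finite J \<Longrightarrow> ps (chi I J) a = int (cnt I a) - int (cnt J a)"
  unfolding ps_def chi_def by (simp add: sum_subtractf sum_ind_cnt)

lemma cnt_full: "finite I \<Longrightarrow> I \<subseteq> {1..n} \<Longrightarrow> n \<le> a \<Longrightarrow> cnt I a = card I"
  unfolding cnt_def by (rule arg_cong[where f=card]) auto

lemma chi_inj:
  assumes "I \<inter> J = {}" shows "I = {b. chi I J b = 1}" "J = {b. chi I J b = -1}"
  using assms unfolding chi_def by auto

lemma ps_Suc: "ps v (Suc a) = ps v a + v (Suc a)"
  unfolding ps_def by simp

lemma ps_0: "ps v 0 = v 0" unfolding ps_def by simp

lemma Alt_vals:
  assumes "v \<in> Alt n j" shows "v b \<in> {-1, 0, 1}"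
proof (cases b)
  case 0
  then show ?thesis using assms unfolding Alt_def by auto
next
  case (Suc b')
  have "v b = ps v (Suc b') - ps v b'" using Suc ps_Suc[of v b'] by simp
  moreover have "ps v (Suc b') \<in> {0,1}" "ps v b' \<in> {0,1}" using assms unfolding Alt_def by auto
  ultimately show ?thesis by auto
qed

lemma Pairs_Alt_bij: "bij_betw (\<lambda>(I, J). chi I J) (Pairs n j) (Alt n j)"
proof (rule bij_betw_imageI)
  show "inj_on (\<lambda>(I, J). chi I J) (Pairs n j)"
  proof (rule inj_onI, clarify)
    fix I J I' J'
    assume p: "(I, J) \<in> Pairs n j" "(I', J') \<in> Pairs n j" and e: "chi I J = chi I' J'"
    have f: "finite I" "finite J" "finite I'" "finite J'" using p unfolding Pairs_def subsets_of_def
      by (auto intro: finite_subset)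
    have "I \<inter> J = {}" "I' \<inter> J' = {}" using p f interlace_imp(2) unfolding Pairs_def by auto
    then show "I = I' \<and> J = J'" using chi_inj e by metis
  qed
  show "(\<lambda>(I, J). chi I J) ` Pairs n j = Alt n j"
  proof
    show "(\<lambda>(I, J). chi I J) ` Pairs n j \<subseteq> Alt n j"
    proof clarify
      fix I J assume p: "(I, J) \<in> Pairs n j"
      have sub: "I \<subseteq> {1..n}" "J \<subseteq> {1..n}" and cI: "card I = j" and cJ: "card J = j"
        and il: "interlace I J" using p unfolding Pairs_def subsets_of_def by auto
      have f: "finite I" "finite J" using sub by (auto intro: finite_subset)
      have dj: "I \<inter> J = {}" using interlace_imp(2)[OF f il] .
      have "\<forall>b. chi I J b \<noteq> 0 \<longrightarrow> 1 \<le> b \<and> b \<le> n" using sub unfolding chi_def by auto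
      moreover have "\<forall>a. ps (chi I J) a \<in> {0,1}"
      proof
        fix a show "ps (chi I J) a \<in> {0,1}"
          using ps_chi[OF f, of a] interlace_imp(1)[OF f il, of a] by auto
      qed
      moreover have "ps (chi I J) n = 0" using ps_chi[OF f, of n] cnt_full[OF f(1) sub(1)] cnt_full[OF f(2) sub(2)]
        cI cJ by simp
      moreover have "{b\<in>{1..n}. chi I J b = 1} = I" using sub dj unfolding chi_def by auto
      ultimately show "chi I J \<in> Alt n j" unfolding Alt_def using cI by auto
    qed
    show "Alt n j \<subseteq> (\<lambda>(I, J). chi I J) ` Pairs n j"
    proof
      fix v assume v: "v \<in> Alt n j"
      define I where "I = {b\<in>{1..n}. v b = 1}"
      define J where "J = {b\<in>{1..n}. v b = -1}"
      have sub: "I \<subseteq> {1..n}" "J \<subseteq> {1..n}" unfolding I_def J_def by auto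
      have f: "finite I" "finite J" using sub by (auto intro: finite_subset)
      have dj: "I \<inter> J = {}" unfolding I_def J_def by auto
      have supp: "\<forall>b. v b \<noteq> 0 \<longrightarrow> 1 \<le> b \<and> b \<le> n" using v unfolding Alt_def by auto
      have veq: "v = chi I J"
      proof
        fix b
        show "v b = chi I J b"
          using Alt_vals[OF v, of b] supp unfolding chi_def I_def J_def by auto
      qed
      have cI: "card I = j" using v unfolding Alt_def I_def by auto
      have "ps v n = 0" using v unfolding Alt_def by auto
      then have "card J = card I" using ps_chi[OF f, of n] cnt_full[OF f(1) sub(1)] cnt_full[OF f(2) sub(2)]
        veq by simp
      have cnts: "cnt J a \<le> cnt I a \<and> cnt I a \<le> cnt J a + 1" for a
      proof -
        have "ps v a \<in> {0,1}" using v unfolding Alt_def by auto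
        then show ?thesis using ps_chi[OF f, of a] veq by auto
      qed
      have il: "interlace I J" using imp_interlace[OF f \<open>card J = card I\<close> dj cnts] .
      have "(I, J) \<in> Pairs n j" unfolding Pairs_def subsets_of_def using sub cI \<open>card J = card I\<close> il by auto
      then show "v \<in> (\<lambda>(I, J). chi I J) ` Pairs n j" using veq by force
    qed
  qed
qed



definition Cm :: "nat \<Rightarrow> (nat \<Rightarrow> real) \<Rightarrow> (nat \<Rightarrow> int) \<Rightarrow> real" where
  "Cm n m v = (\<Prod>b\<in>{1..n}. if v b = 0 then 1 else m b)"

definition Lx :: "nat \<Rightarrow> (nat \<Rightarrow> int) \<Rightarrow> (nat \<Rightarrow> real) \<Rightarrow> real" where
  "Lx n v x = (\<Sum>b\<in>{1..n}. of_int (v b) * x b)"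

definition Wt :: "nat \<Rightarrow> (nat \<Rightarrow> real) \<Rightarrow> (nat \<Rightarrow> int) \<Rightarrow> (nat \<Rightarrow> real) \<Rightarrow> real" where
  "Wt n m v x = Cm n m v * exp (Lx n v x)"

lemma summand_eq:
  assumes sub: "I \<subseteq> {1..n}" "J \<subseteq> {1..n}" and dj: "I \<inter> J = {}"
  shows "(\<Prod>i\<in>I. m i * exp (x i)) * (\<Prod>l\<in>J. m l * exp (- x l)) = Wt n m (chi I J) x"
proof -
  have f: "finite I" "finite J" using sub by (auto intro: finite_subset)
  have p1: "(\<Prod>i\<in>I. m i * exp (x i)) = prod m I * exp (sum x I)"
    using f by (simp add: prod.distrib exp_sum)
  have p2: "(\<Prod>l\<in>J. m l * exp (- x l)) = prod m J * exp (- sum x J)"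
    using f by (simp add: prod.distrib exp_sum sum_negf[symmetric])
  have "Cm n m (chi I J) = (\<Prod>b\<in>{1..n}. if b \<in> I \<union> J then m b else 1)"
    unfolding Cm_def chi_def using dj by (intro prod.cong) auto
  also have "\<dots> = prod m (I \<union> J)"
  proof -
    have "(\<Prod>b\<in>{1..n}. if b \<in> I \<union> J then m b else 1) = prod m {b\<in>{1..n}. b \<in> I \<union> J}"
      by (rule prod.inter_filter[symmetric]) simp
    also have "{b\<in>{1..n}. b \<in> I \<union> J} = I \<union> J" using sub by auto
    finally show ?thesis .
  qed
  also have "\<dots> = prod m I * prod m J" using f dj by (simp add: prod.union_disjoint)
  finally have c: "Cm n m (chi I J) = prod m I * prod m J" .
  have "Lx n (chi I J) x = (\<Sum>b\<in>{1..n}. (if b \<in> I then x b else 0) - (if b \<in> J then x b else 0))"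
    unfolding Lx_def chi_def by (intro sum.cong) auto
  also have "\<dots> = sum x I - sum x J"
  proof -
    have a: "(\<Sum>b\<in>{1..n}. if b \<in> I then x b else 0) = sum x I"
      proof -
      have "(\<Sum>b\<in>{1..n}. if b \<in> I then x b else 0) = sum x {b\<in>{1..n}. b \<in> I}"
        by (rule sum.inter_filter[symmetric]) simp
      also have "{b\<in>{1..n}. b \<in> I} = I" using sub by auto
      finally show ?thesis .
    qed
    have b: "(\<Sum>b\<in>{1..n}. if b \<in> J then x b else 0) = sum x J"
      proof -
      have "(\<Sum>b\<in>{1..n}. if b \<in> J then x b else 0) = sum x {b\<in>{1..n}. b \<in> J}"
        by (rule sum.inter_filter[symmetric]) simp
      also have "{b\<in>{1..n}. b \<in> J} = J" using sub by auto
      finally show ?thesis .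
    qed
    show ?thesis by (simp only: sum_subtractf a b)
  qed
  finally have l: "Lx n (chi I J) x = sum x I - sum x J" .
  show ?thesis unfolding Wt_def c l p1 p2 by (simp add: exp_diff exp_minus field_simps)
qed

lemma H_Alt: "H K m j x = (\<Sum>v\<in>Alt (2*K) j. Wt (2*K) m v x)"
proof -
  have "H K m j x = (\<Sum>(I, J)\<in>Pairs (2*K) j. (\<Prod>i\<in>I. m i * exp (x i)) * (\<Prod>l\<in>J. m l * exp (- x l)))"
    unfolding H_def Pairs_def by simp
  also have "\<dots> = (\<Sum>(I, J)\<in>Pairs (2*K) j. Wt (2*K) m (chi I J) x)"
  proof (intro sum.cong refl, clarify)
    fix I J assume p: "(I, J) \<in> Pairs (2 * K) j"
    have sub: "I \<subseteq> {1..2*K}" "J \<subseteq> {1..2*K}" and il: "interlace I J"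
      using p unfolding Pairs_def subsets_of_def by auto
    have f: "finite I" "finite J" using sub by (auto intro: finite_subset)
    show "(\<Prod>i\<in>I. m i * exp (x i)) * (\<Prod>l\<in>J. m l * exp (- x l)) = Wt (2 * K) m (chi I J) x"
      using summand_eq[OF sub interlace_imp(2)[OF f il]] .
  qed
  also have "\<dots> = (\<Sum>v\<in>Alt (2*K) j. Wt (2*K) m v x)"
    using sum.reindex_bij_betw[OF Pairs_Alt_bij[of "2*K" j], of "\<lambda>v. Wt (2*K) m v x"]
    by (simp add: case_prod_unfold)
  finally show ?thesis .
qed

lemma Lx_upd:
  assumes "\<forall>b. v b \<noteq> 0 \<longrightarrow> 1 \<le> b \<and> b \<le> n"
  shows "Lx n v (x(a := t)) = Lx n v x + of_int (v a) * (t - x a)"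
proof -
  have "Lx n v (x(a := t)) = (\<Sum>b\<in>{1..n}. of_int (v b) * x b + (if b = a then of_int (v a) * (t - x a) else 0))"
    unfolding Lx_def by (intro sum.cong) (auto simp: algebra_simps)
  also have "\<dots> = Lx n v x + (if a \<in> {1..n} then of_int (v a) * (t - x a) else 0)"
    unfolding Lx_def by (simp add: sum.distrib)
  also have "\<dots> = Lx n v x + of_int (v a) * (t - x a)" using assms by auto
  finally show ?thesis .
qed

lemma Alt_finite: "finite (Alt n j)"
proof -
  have "finite (Pairs n j)"
  proof (rule finite_subset)
    show "Pairs n j \<subseteq> Pow {1..n} \<times> Pow {1..n}" unfolding Pairs_def subsets_of_def by auto
  qed auto
  then show ?thesis using bij_betw_finite[OF Pairs_Alt_bij] by simp
qed

lemma partial_H: "partial (H K m j) a x = (\<Sum>v\<in>Alt (2*K) j. Wt (2*K) m v x * of_int (v a))"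
proof -
  let ?n = "2*K"
  have eq: "(\<lambda>t. H K m j (x(a := t))) = (\<lambda>t. \<Sum>v\<in>Alt ?n j. Cm ?n m v * exp (Lx ?n v x + of_int (v a) * (t - x a)))"
  proof
    fix t
    show "H K m j (x(a := t)) = (\<Sum>v\<in>Alt ?n j. Cm ?n m v * exp (Lx ?n v x + of_int (v a) * (t - x a)))"
      unfolding H_Alt Wt_def
    proof (intro sum.cong refl)
      fix v assume "v \<in> Alt ?n j"
      then have "\<forall>b. v b \<noteq> 0 \<longrightarrow> 1 \<le> b \<and> b \<le> ?n" unfolding Alt_def by auto
      then show "Cm ?n m v * exp (Lx ?n v (x(a := t))) = Cm ?n m v * exp (Lx ?n v x + of_int (v a) * (t - x a))"
        using Lx_upd by simp
    qed
  qed
  have d: "((\<lambda>t. \<Sum>v\<in>Alt ?n j. Cm ?n m v * exp (Lx ?n v x + of_int (v a) * (t - x a))) has_field_derivative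
      (\<Sum>v\<in>Alt ?n j. Cm ?n m v * (exp (Lx ?n v x + of_int (v a) * (x a - x a)) * (of_int (v a))))) (at (x a))"
    by (intro DERIV_sum DERIV_cmult) (auto intro!: derivative_eq_intros)
  show ?thesis unfolding partial_def eq using DERIV_imp_deriv[OF d] by (simp add: Wt_def mult.assoc)
qed



definition Bf :: "nat \<Rightarrow> (nat \<Rightarrow> int) \<Rightarrow> (nat \<Rightarrow> int) \<Rightarrow> int" where
  "Bf n v u = (\<Sum>a\<in>{1..n}. \<Sum>k\<in>{1..n}. sgn (int a - int k) * v a * u k)"

definition tt :: "(nat \<Rightarrow> int) \<Rightarrow> (nat \<Rightarrow> int) \<Rightarrow> nat \<Rightarrow> int" where
  "tt v u b = (ps v (b - 1) + ps u (b - 1) + ps v b + ps u b - 2) * (v b - u b)"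

lemma ps_support:
  assumes "\<forall>b. v b \<noteq> 0 \<longrightarrow> 1 \<le> b \<and> b \<le> n"
  shows "ps v c = (\<Sum>a\<in>{1..n}. if a \<le> c then v a else 0)"
proof -
  have "ps v c = (\<Sum>a\<in>{..c}. if a \<in> {1..n} then v a else 0)"
    unfolding ps_def using assms by (intro sum.cong) auto
  also have "\<dots> = sum v ({..c} \<inter> {1..n})" using sum.inter_restrict[of "{..c}" v "{1..n}"] by simp
  also have "\<dots> = sum v ({1..n} \<inter> {..c})" by (simp add: Int_commute)
  also have "\<dots> = (\<Sum>a\<in>{1..n}. if a \<in> {..c} then v a else 0)" using sum.inter_restrict[of "{1..n}" v "{..c}"] by simp
  finally show ?thesis by simp
qed

lemma sgn_sum:
  assumes supp: "\<forall>b. v b \<noteq> 0 \<longrightarrow> 1 \<le> b \<and> b \<le> n" and pn: "ps v n = 0" and k: "1 \<le> k"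
  shows "(\<Sum>a\<in>{1..n}. sgn (int a - int k) * v a) = - (ps v (k - 1) + ps v k)"
proof -
  have "(\<Sum>a\<in>{1..n}. sgn (int a - int k) * v a)
      = (\<Sum>a\<in>{1..n}. (v a - (if a \<le> k then v a else 0)) - (if a \<le> k - 1 then v a else 0))"
    using k by (intro sum.cong refl) (auto simp: sgn_if)
  also have "\<dots> = (ps v n - ps v k) - ps v (k - 1)"
    using ps_support[OF supp, of n] ps_support[OF supp, of k] ps_support[OF supp, of "k - 1"]
    by (simp add: sum_subtractf)
  finally show ?thesis using pn by simp
qed

lemma telesc: "(\<Sum>b\<in>{1..n::nat}. g b - g (b - 1)) = (g n - g 0 :: int)"
  by (induction n) (auto simp: sum.cl_ivl_Suc)

lemma v_ps: "1 \<le> b \<Longrightarrow> v b = ps v b - ps v (b - 1)"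
  using ps_Suc[of v "b - 1"] by simp

lemma Bf_tt:
  assumes sv: "\<forall>b. v b \<noteq> 0 \<longrightarrow> 1 \<le> b \<and> b \<le> n" and pv: "ps v n = 0"
    and su: "\<forall>b. u b \<noteq> 0 \<longrightarrow> 1 \<le> b \<and> b \<le> n" and pu: "ps u n = 0"
  shows "2 * Bf n v u = (\<Sum>b\<in>{1..n}. tt v u b)"
proof -
  have B1: "Bf n v u = - (\<Sum>k\<in>{1..n}. u k * (ps v (k - 1) + ps v k))"
  proof -
    have "Bf n v u = (\<Sum>k\<in>{1..n}. \<Sum>a\<in>{1..n}. sgn (int a - int k) * v a * u k)"
      unfolding Bf_def by (rule sum.swap)
    also have "\<dots> = (\<Sum>k\<in>{1..n}. u k * (\<Sum>a\<in>{1..n}. sgn (int a - int k) * v a))"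
      by (simp add: sum_distrib_left mult_ac)
    also have "\<dots> = (\<Sum>k\<in>{1..n}. u k * (- (ps v (k - 1) + ps v k)))"
      using sgn_sum[OF sv pv] by (intro sum.cong) auto
    finally show ?thesis by (simp add: sum_negf[symmetric] algebra_simps)
  qed
  have B2: "Bf n v u = (\<Sum>a\<in>{1..n}. v a * (ps u (a - 1) + ps u a))"
  proof -
    have "Bf n v u = (\<Sum>a\<in>{1..n}. v a * - (\<Sum>k\<in>{1..n}. sgn (int k - int a) * u k))"
      unfolding Bf_def
    proof (intro sum.cong refl)
      fix a
      have "sgn (int a - int k) = - sgn (int k - int a)" for k
        by (simp add: sgn_if)
      then show "(\<Sum>k\<in>{1..n}. sgn (int a - int k) * v a * u k) = v a * - (\<Sum>k\<in>{1..n}. sgn (int k - int a) * u k)"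
        by (simp add: sum_distrib_left sum_negf mult_ac)
    qed
    also have "\<dots> = (\<Sum>a\<in>{1..n}. v a * (ps u (a - 1) + ps u a))"
      using sgn_sum[OF su pu] by (intro sum.cong) auto
    finally show ?thesis .
  qed
  have T1: "(\<Sum>b\<in>{1..n}. v b * (ps v (b - 1) + ps v b)) = 0"
  proof -
    have "(\<Sum>b\<in>{1..n}. v b * (ps v (b - 1) + ps v b)) = (\<Sum>b\<in>{1..n}. (ps v b)^2 - (ps v (b - 1))^2)"
    proof (intro sum.cong refl)
      fix b assume "b \<in> {1..n}"
      then have "1 \<le> b" by simp
      show "v b * (ps v (b - 1) + ps v b) = (ps v b)^2 - (ps v (b - 1))^2"
        by (subst v_ps[OF \<open>1 \<le> b\<close>, of v]) (simp add: power2_eq_square algebra_simps)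
    qed
    also have "\<dots> = (ps v n)^2 - (ps v 0)^2" by (rule telesc)
    moreover have "v 0 = 0" using sv by (metis not_one_le_zero)
    ultimately show ?thesis using pv ps_0[of v] by simp
  qed
  have T2: "(\<Sum>b\<in>{1..n}. u b * (ps u (b - 1) + ps u b)) = 0"
  proof -
    have "(\<Sum>b\<in>{1..n}. u b * (ps u (b - 1) + ps u b)) = (\<Sum>b\<in>{1..n}. (ps u b)^2 - (ps u (b - 1))^2)"
    proof (intro sum.cong refl)
      fix b assume "b \<in> {1..n}"
      then have "1 \<le> b" by simp
      show "u b * (ps u (b - 1) + ps u b) = (ps u b)^2 - (ps u (b - 1))^2"
        by (subst v_ps[OF \<open>1 \<le> b\<close>, of u]) (simp add: power2_eq_square algebra_simps)
    qed
    also have "\<dots> = (ps u n)^2 - (ps u 0)^2" by (rule telesc)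
    moreover have "u 0 = 0" using su by (metis not_one_le_zero)
    ultimately show ?thesis using pu ps_0[of u] by simp
  qed
  have S1: "(\<Sum>b\<in>{1..n}. v b) = 0" using ps_support[OF sv, of n] pv by simp
  have S2: "(\<Sum>b\<in>{1..n}. u b) = 0" using ps_support[OF su, of n] pu by simp
  have "(\<Sum>b\<in>{1..n}. tt v u b) = (\<Sum>b\<in>{1..n}. v b * (ps v (b - 1) + ps v b)) - (\<Sum>b\<in>{1..n}. u b * (ps v (b - 1) + ps v b))
     + (\<Sum>b\<in>{1..n}. v b * (ps u (b - 1) + ps u b)) - (\<Sum>b\<in>{1..n}. u b * (ps u (b - 1) + ps u b))
     - 2 * (\<Sum>b\<in>{1..n}. v b) + 2 * (\<Sum>b\<in>{1..n}. u b)"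
    unfolding tt_def by (simp add: sum_subtractf sum.distrib sum_distrib_left algebra_simps)
  also have "\<dots> = 2 * Bf n v u"
    using T1 T2 S1 S2 B1 B2 by (simp add: sum_negf)
  finally show ?thesis by simp
qed



lemma sum4_swap:
  "(\<Sum>a\<in>A. \<Sum>k\<in>B. \<Sum>v\<in>C. \<Sum>u\<in>D. f a k v u) = (\<Sum>v\<in>C. \<Sum>u\<in>D. \<Sum>a\<in>A. \<Sum>k\<in>B. (f a k v u :: real))"
proof -
  have "(\<Sum>a\<in>A. \<Sum>k\<in>B. \<Sum>v\<in>C. \<Sum>u\<in>D. f a k v u) = (\<Sum>a\<in>A. \<Sum>v\<in>C. \<Sum>k\<in>B. \<Sum>u\<in>D. f a k v u)"
    by (intro sum.cong refl sum.swap)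
  also have "\<dots> = (\<Sum>v\<in>C. \<Sum>a\<in>A. \<Sum>k\<in>B. \<Sum>u\<in>D. f a k v u)" by (rule sum.swap)
  also have "\<dots> = (\<Sum>v\<in>C. \<Sum>a\<in>A. \<Sum>u\<in>D. \<Sum>k\<in>B. f a k v u)"
    by (intro sum.cong refl sum.swap)
  also have "\<dots> = (\<Sum>v\<in>C. \<Sum>u\<in>D. \<Sum>a\<in>A. \<Sum>k\<in>B. f a k v u)"
    by (intro sum.cong refl sum.swap)
  finally show ?thesis .
qed

lemma pbracket_expand:
  assumes srt: "\<forall>a b. 1 \<le> a \<longrightarrow> a < b \<longrightarrow> b \<le> 2 * K \<longrightarrow> x a < x b"
  shows "pbracket (2*K) (H K m i) (H K m j) x =
    (\<Sum>v\<in>Alt (2*K) i. \<Sum>u\<in>Alt (2*K) j. Wt (2*K) m v x * Wt (2*K) m u x * of_int (Bf (2*K) v u))"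
proof -
  let ?n = "2*K"
  let ?W = "\<lambda>v. Wt ?n m v x"
  have sg: "sgn (x a - x k) = of_int (sgn (int a - int k))" if "a \<in> {1..?n}" "k \<in> {1..?n}" for a k
  proof -
    consider "a < k" | "a = k" | "k < a" by linarith
    then show ?thesis
    proof cases
      case 1 then have "x a < x k" using srt that by auto
      then show ?thesis using 1 by simp
    next
      case 2 then show ?thesis by simp
    next
      case 3 then have "x k < x a" using srt that by auto
      then show ?thesis using 3 by simp
    qed
  qed
  have "pbracket ?n (H K m i) (H K m j) x =
     (\<Sum>a\<in>{1..?n}. \<Sum>k\<in>{1..?n}. \<Sum>v\<in>Alt ?n i. \<Sum>u\<in>Alt ?n j.
        of_int (sgn (int a - int k)) * (?W v * of_int (v a)) * (?W u * of_int (u k)))"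
    unfolding pbracket_def partial_H
  proof (intro sum.cong refl)
    fix a k assume "a \<in> {1..?n}" "k \<in> {1..?n}"
    then show "sgn (x a - x k) * (\<Sum>v\<in>Alt ?n i. ?W v * real_of_int (v a)) * (\<Sum>v\<in>Alt ?n j. ?W v * real_of_int (v k)) =
        (\<Sum>v\<in>Alt ?n i. \<Sum>u\<in>Alt ?n j. of_int (sgn (int a - int k)) * (?W v * of_int (v a)) * (?W u * of_int (u k)))"
      using sg by (simp add: sum_distrib_left sum_distrib_right mult_ac)
  qed
  also have "\<dots> = (\<Sum>v\<in>Alt ?n i. \<Sum>u\<in>Alt ?n j. \<Sum>a\<in>{1..?n}. \<Sum>k\<in>{1..?n}.
        of_int (sgn (int a - int k)) * (?W v * of_int (v a)) * (?W u * of_int (u k)))"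
    by (rule sum4_swap)
  also have "\<dots> = (\<Sum>v\<in>Alt ?n i. \<Sum>u\<in>Alt ?n j. ?W v * ?W u * of_int (Bf ?n v u))"
    unfolding Bf_def by (simp add: sum_distrib_left mult_ac)
  finally show ?thesis .
qed



definition nx :: "(nat \<Rightarrow> int) \<Rightarrow> (nat \<Rightarrow> int) \<Rightarrow> nat \<Rightarrow> nat" where
  "nx v u c = (LEAST d. c \<le> d \<and> ps v d = ps u d)"

definition Gc :: "(nat \<Rightarrow> int) \<Rightarrow> (nat \<Rightarrow> int) \<Rightarrow> nat \<Rightarrow> int" where
  "Gc v u c = (if ps v (c - 1) = ps u (c - 1) then (\<Sum>b\<in>{c..nx v u c}. tt v u b) else 0)"

lemma nx_props:
  assumes "c \<le> n" "ps v n = ps u n"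
  shows "c \<le> nx v u c" "nx v u c \<le> n" "ps v (nx v u c) = ps u (nx v u c)"
    "\<And>a. c \<le> a \<Longrightarrow> a < nx v u c \<Longrightarrow> ps v a \<noteq> ps u a"
proof -
  have ex: "c \<le> n \<and> ps v n = ps u n" using assms by simp
  show "c \<le> nx v u c" "ps v (nx v u c) = ps u (nx v u c)"
    unfolding nx_def using LeastI[of "\<lambda>d. c \<le> d \<and> ps v d = ps u d", OF ex] by auto
  show "nx v u c \<le> n" unfolding nx_def by (rule Least_le) (rule ex)
  fix a assume "c \<le> a" "a < nx v u c"
  then show "ps v a \<noteq> ps u a" unfolding nx_def using not_less_Least by blast
qed

lemma sum_split_nat:
  assumes "c \<le> Suc d" "d \<le> n"
  shows "(\<Sum>b\<in>{c..n}. f b) = (\<Sum>b\<in>{c..d}. f b) + (\<Sum>b\<in>{Suc d..n}. (f b :: int))"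
proof -
  have "{c..n} = {c..d} \<union> {Suc d..n}" using assms by auto
  moreover have "{c..d} \<inter> {Suc d..n} = {}" by auto
  ultimately show ?thesis by (simp add: sum.union_disjoint)
qed

lemma decomp_aux:
  assumes pn: "ps v n = ps u n"
  shows "1 \<le> c \<Longrightarrow> c \<le> n + 1 \<Longrightarrow> ps v (c - 1) = ps u (c - 1) \<Longrightarrow>
    (\<Sum>b\<in>{c..n}. tt v u b) = (\<Sum>c'\<in>{c..n}. Gc v u c')"
proof (induction "n + 1 - c" arbitrary: c rule: less_induct)
  case less
  show ?case
  proof (cases "c = n + 1")
    case True then show ?thesis by simp
  next
    case False
    then have cn: "c \<le> n" using less.prems by simp
    define d where "d = nx v u c"
    have cd: "c \<le> d" and dn: "d \<le> n" and Ed: "ps v d = ps u d"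
      and nE: "\<And>a. c \<le> a \<Longrightarrow> a < d \<Longrightarrow> ps v a \<noteq> ps u a"
      using nx_props[OF cn pn] unfolding d_def by auto
    have IH: "(\<Sum>b\<in>{Suc d..n}. tt v u b) = (\<Sum>c'\<in>{Suc d..n}. Gc v u c')"
      using less.hyps[of "Suc d"] cd dn Ed by simp
    have "(\<Sum>c'\<in>{c..n}. Gc v u c') = (\<Sum>c'\<in>{c..d}. Gc v u c') + (\<Sum>c'\<in>{Suc d..n}. Gc v u c')"
      using cd dn by (intro sum_split_nat) auto
    also have "(\<Sum>c'\<in>{c..d}. Gc v u c') = (\<Sum>c'\<in>{c..c}. Gc v u c') + (\<Sum>c'\<in>{Suc c..d}. Gc v u c')"
      using cd by (intro sum_split_nat) auto
    also have "(\<Sum>c'\<in>{Suc c..d}. Gc v u c') = 0"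
    proof (rule sum.neutral, rule ballI)
      fix c' assume "c' \<in> {Suc c..d}"
      then have "c \<le> c' - 1" "c' - 1 < d" by auto
      then have "ps v (c' - 1) \<noteq> ps u (c' - 1)" using nE[of "c' - 1"] by blast
      then show "Gc v u c' = 0" unfolding Gc_def by simp
    qed
    also have "(\<Sum>c'\<in>{c..c}. Gc v u c') = (\<Sum>b\<in>{c..d}. tt v u b)"
      using less.prems unfolding Gc_def d_def by simp
    finally show ?thesis using sum_split_nat[of c d n "tt v u"] cd dn IH by simp
  qed
qed

lemma decomp:
  assumes "ps v n = ps u n" "v 0 = u 0"
  shows "(\<Sum>b\<in>{1..n}. tt v u b) = (\<Sum>c\<in>{1..n}. Gc v u c)"
  using decomp_aux[OF assms(1), of 1] assms(2) ps_0[of v] ps_0[of u] by simp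

definition fl :: "nat \<Rightarrow> nat \<Rightarrow> (nat \<Rightarrow> int) \<Rightarrow> (nat \<Rightarrow> int) \<Rightarrow> nat \<Rightarrow> int" where
  "fl c d v u = (\<lambda>b. if c \<le> b \<and> b \<le> d then u b else v b)"

lemma ps_fl:
  assumes c1: "1 \<le> c" and cd: "c \<le> d" and E1: "ps v (c - 1) = ps u (c - 1)" and E2: "ps v d = ps u d"
  shows "ps (fl c d v u) a = (if a < c then ps v a else if a \<le> d then ps u a else ps v a)"
proof (induction a)
  case 0
  then show ?case using c1 unfolding fl_def by (simp add: ps_0)
next
  case (Suc a)
  have "ps (fl c d v u) (Suc a) = ps (fl c d v u) a + fl c d v u (Suc a)" by (rule ps_Suc)
  also have "\<dots> = (if Suc a < c then ps v (Suc a) else if Suc a \<le> d then ps u (Suc a) else ps v (Suc a))"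
  proof -
    consider "Suc a < c" | "Suc a = c" | "c < Suc a \<and> Suc a \<le> d" | "Suc a = Suc d" | "Suc d < Suc a" by linarith
    then show ?thesis
    proof cases
      case 1 then show ?thesis using Suc unfolding fl_def by (simp add: ps_Suc)
    next
      case 2 then have "a = c - 1" by simp
      have pc: "ps u c = ps u (c - 1) + u c" using ps_Suc[of u "c - 1"] c1 by simp
      show ?thesis using Suc 2 E1 cd pc \<open>a = c - 1\<close> unfolding fl_def by (simp add: ps_Suc)
    next
      case 3 then show ?thesis using Suc unfolding fl_def by (simp add: ps_Suc)
    next
      case 4 then show ?thesis using Suc E2 cd unfolding fl_def by (simp add: ps_Suc)
    next
      case 5 then show ?thesis using Suc unfolding fl_def by (simp add: ps_Suc)
    qed
  qed
  finally show ?case .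
qed

lemma fl_fl: "fl c d (fl c d v u) (fl c d u v) = v"
  unfolding fl_def by auto

lemma sum_range_ps:
  assumes "1 \<le> c" "c \<le> Suc d"
  shows "(\<Sum>b\<in>{c..d}. w b) = ps w d - ps w (c - 1)"
proof -
  have "ps w d = (\<Sum>b\<in>{..c - 1}. w b) + (\<Sum>b\<in>{c..d}. w b)"
  proof -
    have "{..d} = {..c - 1} \<union> {c..d}" using assms by auto
    moreover have "{..c - 1} \<inter> {c..d} = {}" using assms by auto
    ultimately show ?thesis unfolding ps_def by (simp add: sum.union_disjoint)
  qed
  then show ?thesis unfolding ps_def by simp
qed

lemma endpoints_sum:
  fixes c d :: nat
  assumes "c < d" "\<And>b. c < b \<Longrightarrow> b < d \<Longrightarrow> f b = 0"
  shows "(\<Sum>b\<in>{c..d}. f b) = f c + (f d :: int)"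
proof -
  have "(\<Sum>b\<in>{c..d}. f b) = (\<Sum>b\<in>{c, d}. f b)"
  proof (rule sum.mono_neutral_right)
    show "\<forall>i\<in>{c..d} - {c, d}. f i = 0"
    proof
      fix i assume "i \<in> {c..d} - {c, d}"
      then have "c < i" "i < d" by (auto simp: order.order_iff_strict)
      then show "f i = 0" using assms(2) by blast
    qed
  qed (use assms in auto)
  then show ?thesis using assms by simp
qed



lemma fincheck:
  fixes a b c d a' b' c' d' :: int
  assumes "a \<in> {0,1}" "b \<in> {0,1}" "c \<in> {0,1}" "d \<in> {0,1}"
    "a' \<in> {0,1}" "b' \<in> {0,1}" "c' \<in> {0,1}" "d' \<in> {0,1}"
    "a = a'" "d = d'" "b + b' = 1" "c + c' = 1"
    "(a + a' + b + b' - 2) * ((b - a) - (b' - a')) + (c + c' + d + d' - 2) * ((d - c) - (d' - c')) \<noteq> 0"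
  shows "((b' - a')^2 - (b - a)^2) + ((d' - c')^2 - (d - c)^2) = 0"
  using assms by auto

lemma ind_sq: "y \<in> {-1, 0, 1::int} \<Longrightarrow> 2 * (if y = 1 then 1 else 0) = y^2 + y"
  by auto

lemma card_ind: fixes n :: nat shows "int (card {b\<in>{1..n}. w b = (1::int)}) = (\<Sum>b\<in>{1..n}. if w b = 1 then 1 else 0)"
proof -
  have "(\<Sum>b\<in>{1..n}. if w b = 1 then 1 else 0::int) = (\<Sum>b\<in>{b\<in>{1..n}. w b = 1}. 1)"
    by (rule sum.inter_filter[symmetric]) simp
  then show ?thesis by simp
qed



lemma Alt_supp: "v \<in> Alt n j \<Longrightarrow> v b \<noteq> 0 \<Longrightarrow> 1 \<le> b \<and> b \<le> n"
  unfolding Alt_def by auto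
lemma Alt_ps: "v \<in> Alt n j \<Longrightarrow> ps v a \<in> {0,1}"
  unfolding Alt_def by auto
lemma Alt_pn: "v \<in> Alt n j \<Longrightarrow> ps v n = 0"
  unfolding Alt_def by auto
lemma Alt_card: "v \<in> Alt n j \<Longrightarrow> card {b\<in>{1..n}. v b = 1} = j"
  unfolding Alt_def by auto

lemma flip_props:
  assumes v: "v \<in> Alt n i" and u: "u \<in> Alt n j" and c1: "1 \<le> c" and cn: "c \<le> n"
    and E1: "ps v (c - 1) = ps u (c - 1)" and G: "Gc v u c \<noteq> 0" and dd: "d = nx v u c"
  shows "fl c d v u \<in> Alt n i" "fl c d u v \<in> Alt n j"
    "ps (fl c d v u) (c - 1) = ps (fl c d u v) (c - 1)"
    "nx (fl c d v u) (fl c d u v) c = d"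
    "Gc (fl c d v u) (fl c d u v) c = - Gc v u c"
    "Wt n m (fl c d v u) x * Wt n m (fl c d u v) x = Wt n m v x * Wt n m u x"
proof -
  let ?v = "fl c d v u" and ?u = "fl c d u v"
  have pn: "ps v n = ps u n" using Alt_pn[OF v] Alt_pn[OF u] by simp
  have cd: "c \<le> d" and dn: "d \<le> n" and Ed: "ps v d = ps u d"
    and nE: "\<And>a. c \<le> a \<Longrightarrow> a < d \<Longrightarrow> ps v a \<noteq> ps u a"
    using nx_props[OF cn pn] unfolding dd by auto
  have psv: "ps ?v a = (if a < c then ps v a else if a \<le> d then ps u a else ps v a)" for a
    using ps_fl[OF c1 cd E1 Ed] .
  have psu: "ps ?u a = (if a < c then ps u a else if a \<le> d then ps v a else ps u a)" for a
    using ps_fl[OF c1 cd E1[symmetric] Ed[symmetric]] .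
  have Eeq: "(ps ?v a = ps ?u a) \<longleftrightarrow> (ps v a = ps u a)" for a
    using psv[of a] psu[of a] by auto
  have Ssum: "ps ?v a + ps ?u a = ps v a + ps u a" for a
    using psv[of a] psu[of a] by auto
  show E1': "ps ?v (c - 1) = ps ?u (c - 1)" using Eeq E1 by simp
  show nx': "nx ?v ?u c = d" unfolding nx_def Eeq unfolding dd nx_def ..
  have Gvu: "Gc v u c = (\<Sum>b\<in>{c..d}. tt v u b)" unfolding Gc_def dd using E1 by simp
  show "Gc ?v ?u c = - Gc v u c"
  proof -
    have "Gc ?v ?u c = (\<Sum>b\<in>{c..d}. tt ?v ?u b)" unfolding Gc_def nx' using E1' by simp
    also have "\<dots> = (\<Sum>b\<in>{c..d}. - tt v u b)"
    proof (intro sum.cong refl)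
      fix b assume "b \<in> {c..d}"
      then have "?v b - ?u b = - (v b - u b)" unfolding fl_def by auto
      moreover have "ps ?v (b - 1) + ps ?u (b - 1) + ps ?v b + ps ?u b = ps v (b - 1) + ps u (b - 1) + ps v b + ps u b"
        using Ssum[of "b - 1"] Ssum[of b] by simp
      ultimately show "tt ?v ?u b = - tt v u b" unfolding tt_def
        by (metis (no_types, lifting) add.assoc mult_minus_right)
    qed
    finally show ?thesis using Gvu by (simp add: sum_negf)
  qed
  have swap: "{?v b, ?u b} = {v b, u b}" for b unfolding fl_def by auto
  show "Wt n m ?v x * Wt n m ?u x = Wt n m v x * Wt n m u x"
  proof -
    have "Cm n m ?v * Cm n m ?u = Cm n m v * Cm n m u"
      unfolding Cm_def prod.distrib[symmetric]
      by (intro prod.cong refl) (auto simp: fl_def)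
    moreover have "Lx n ?v x + Lx n ?u x = Lx n v x + Lx n u x"
      unfolding Lx_def sum.distrib[symmetric]
      by (intro sum.cong refl) (auto simp: fl_def algebra_simps)
    ultimately show ?thesis unfolding Wt_def
      by (metis (no_types, lifting) exp_add mult.assoc mult.left_commute)
  qed
  have vc: "v b = ps v b - ps v (b - 1)" "u b = ps u b - ps u (b - 1)" if "1 \<le> b" for b
    using v_ps[OF that] by auto
  have cd': "c < d"
  proof (rule ccontr)
    assume "\<not> c < d"
    then have "d = c" using cd by simp
    then have "Gc v u c = tt v u c" using Gvu by simp
    also have "v c = u c" using vc[OF c1] E1 Ed \<open>d = c\<close> by simp
    then have "tt v u c = 0" unfolding tt_def by simp
    finally show False using G by simp
  qed
  have one: "ps v a + ps u a = 1" if "c \<le> a" "a < d" for a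
    using nE[OF that] Alt_ps[OF v, of a] Alt_ps[OF u, of a] by auto
  have interior: "tt v u b = 0 \<and> u b = - v b" if "c < b" "b < d" for b
  proof -
    have "ps v (b - 1) + ps u (b - 1) = 1" using one[of "b - 1"] that by simp
    moreover have "ps v b + ps u b = 1" using one[of b] that by simp
    moreover have "v b + u b = 0" using vc[of b] that calculation by simp
    ultimately show ?thesis unfolding tt_def by simp
  qed
  have Gend: "Gc v u c = tt v u c + tt v u d"
    using Gvu endpoints_sum[OF cd', of "tt v u"] interior by simp
  have d1: "1 \<le> d" "c \<le> d - 1" "d - 1 < d" using c1 cd' by auto
  have sq: "((u c)^2 - (v c)^2) + ((u d)^2 - (v d)^2) = 0"
  proof -
    have vcc: "v c = ps v c - ps v (c - 1)" "u c = ps u c - ps u (c - 1)" using vc[OF c1] by auto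
    have vdd: "v d = ps v d - ps v (d - 1)" "u d = ps u d - ps u (d - 1)" using vc[OF d1(1)] by auto
    have "ps v c + ps u c = 1" using one[of c] cd' by simp
    moreover have "ps v (d - 1) + ps u (d - 1) = 1" using one[OF d1(2,3)] .
    moreover have "tt v u c + tt v u d \<noteq> 0" using G Gend by simp
    ultimately show ?thesis
      using fincheck[OF Alt_ps[OF v, of "c - 1"] Alt_ps[OF v, of c] Alt_ps[OF v, of "d - 1"] Alt_ps[OF v, of d]
          Alt_ps[OF u, of "c - 1"] Alt_ps[OF u, of c] Alt_ps[OF u, of "d - 1"] Alt_ps[OF u, of d] E1 Ed]
        vcc vdd unfolding tt_def by simp
  qed
  have blk: "(\<Sum>b\<in>{c..d}. (if u b = 1 then 1 else 0) - (if v b = 1 then 1 else 0::int)) = 0"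
  proof -
    have "2 * (\<Sum>b\<in>{c..d}. (if u b = 1 then 1 else 0) - (if v b = 1 then 1 else 0::int))
        = (\<Sum>b\<in>{c..d}. ((u b)^2 - (v b)^2) + (u b - v b))"
      unfolding sum_distrib_left
      by (intro sum.cong refl) (simp add: right_diff_distrib ind_sq[OF Alt_vals[OF u]] ind_sq[OF Alt_vals[OF v]])
    also have "\<dots> = (\<Sum>b\<in>{c..d}. (u b)^2 - (v b)^2) + ((\<Sum>b\<in>{c..d}. u b) - (\<Sum>b\<in>{c..d}. v b))"
      by (simp add: sum.distrib sum_subtractf)
    also have "(\<Sum>b\<in>{c..d}. (u b)^2 - (v b)^2) = 0"
      using endpoints_sum[OF cd', of "\<lambda>b. (u b)^2 - (v b)^2"] interior sq by simp
    also have "(\<Sum>b\<in>{c..d}. u b) - (\<Sum>b\<in>{c..d}. v b) = 0"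
      using sum_range_ps[OF c1, of d u] sum_range_ps[OF c1, of d v] cd E1 Ed by simp
    finally show ?thesis by simp
  qed
  have cnt_fl: "card {b\<in>{1..n}. fl c d w w' b = 1} = card {b\<in>{1..n}. w b = 1}"
    if "(\<Sum>b\<in>{c..d}. (if w' b = 1 then 1 else 0) - (if w b = 1 then 1 else 0::int)) = 0" for w w'
  proof -
    have "int (card {b\<in>{1..n}. fl c d w w' b = 1}) - int (card {b\<in>{1..n}. w b = 1})
        = (\<Sum>b\<in>{1..n}. (if fl c d w w' b = 1 then 1 else 0) - (if w b = 1 then 1 else 0::int))"
      unfolding card_ind by (simp add: sum_subtractf)
    also have "\<dots> = (\<Sum>b\<in>{1..n}. if b \<in> {c..d} then (if w' b = 1 then 1 else 0) - (if w b = 1 then 1 else 0::int) else 0)"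
      by (intro sum.cong refl) (auto simp: fl_def)
    also have "\<dots> = (\<Sum>b\<in>{1..n} \<inter> {c..d}. (if w' b = 1 then 1 else 0) - (if w b = 1 then 1 else 0::int))"
      by (rule sum.inter_restrict[OF finite_atLeastAtMost, symmetric])
    also have "{1..n} \<inter> {c..d} = {c..d}" using c1 dn by auto
    finally show ?thesis using that by simp
  qed
  have blk': "(\<Sum>b\<in>{c..d}. (if v b = 1 then 1 else 0) - (if u b = 1 then 1 else 0::int)) = 0"
    using blk by (simp add: sum_subtractf)
  have supp': "?v b \<noteq> 0 \<longrightarrow> 1 \<le> b \<and> b \<le> n" "?u b \<noteq> 0 \<longrightarrow> 1 \<le> b \<and> b \<le> n" for b
    using Alt_supp[OF v, of b] Alt_supp[OF u, of b] unfolding fl_def by auto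
  have psv01: "ps ?v a \<in> {0,1}" "ps ?u a \<in> {0,1}" for a
    using psv[of a] psu[of a] Alt_ps[OF v, of a] Alt_ps[OF u, of a] by auto
  have pnv: "ps ?v n = 0" "ps ?u n = 0"
    using psv[of n] psu[of n] Alt_pn[OF v] Alt_pn[OF u] cd dn c1 by auto
  show "?v \<in> Alt n i" unfolding Alt_def using supp' psv01 pnv cnt_fl[OF blk] Alt_card[OF v] by auto
  show "?u \<in> Alt n j" unfolding Alt_def using supp' psv01 pnv cnt_fl[OF blk'] Alt_card[OF u] by auto
qed



lemma inv_zero:
  assumes "\<And>p. p \<in> S \<Longrightarrow> \<phi> p \<in> S" "\<And>p. p \<in> S \<Longrightarrow> \<phi> (\<phi> p) = p"
    "\<And>p. p \<in> S \<Longrightarrow> f (\<phi> p) = - f p"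
  shows "sum f S = (0::real)"
proof -
  have "bij_betw \<phi> S S" by (rule bij_betw_byWitness[of S \<phi> \<phi>]) (use assms in auto)
  then have "sum (\<lambda>p. f (\<phi> p)) S = sum f S" by (rule sum.reindex_bij_betw)
  moreover have "sum (\<lambda>p. f (\<phi> p)) S = - sum f S" using assms(3) by (simp add: sum_negf)
  ultimately show ?thesis by simp
qed

lemma block_zero:
  assumes c1: "1 \<le> c" and cn: "c \<le> n"
  shows "(\<Sum>p\<in>Alt n i \<times> Alt n j. Wt n m (fst p) x * Wt n m (snd p) x * of_int (Gc (fst p) (snd p) c)) = 0"
proof -
  let ?cond = "\<lambda>p. ps (fst p) (c - 1) = ps (snd p) (c - 1) \<and> Gc (fst p) (snd p) c \<noteq> 0"
  define \<phi> where "\<phi> p = (if ?cond p then (fl c (nx (fst p) (snd p) c) (fst p) (snd p),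
       fl c (nx (fst p) (snd p) c) (snd p) (fst p)) else p)" for p
  show ?thesis
  proof (rule inv_zero[where \<phi> = \<phi>])
    fix p assume p: "p \<in> Alt n i \<times> Alt n j"
    obtain v u where pv: "p = (v, u)" by (cases p)
    have v: "v \<in> Alt n i" and u: "u \<in> Alt n j" using p pv by auto
    show "\<phi> p \<in> Alt n i \<times> Alt n j"
    proof (cases "?cond p")
      case True
      then show ?thesis unfolding \<phi>_def pv
        using flip_props(1,2)[OF v u c1 cn _ _ refl] True pv by auto
    next
      case False
      have "\<phi> p = p" unfolding \<phi>_def using False by (rule if_not_P)
      then show ?thesis using p by simp
    qed
    show "\<phi> (\<phi> p) = p"
    proof (cases "?cond p")
      case True
      then have E1: "ps v (c - 1) = ps u (c - 1)" and G: "Gc v u c \<noteq> 0" using pv by auto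
      note fp = flip_props[OF v u c1 cn E1 G refl]
      have "?cond (\<phi> p)" unfolding \<phi>_def pv using True pv fp(3,5) G by auto
      then show ?thesis unfolding \<phi>_def[of "\<phi> p"] unfolding \<phi>_def pv using True pv fp(4)
        by (simp add: fl_fl)
    next
      case False
      have "\<phi> p = p" unfolding \<phi>_def using False by (rule if_not_P)
      then show ?thesis by simp
    qed
    show "Wt n m (fst (\<phi> p)) x * Wt n m (snd (\<phi> p)) x * of_int (Gc (fst (\<phi> p)) (snd (\<phi> p)) c) =
        - (Wt n m (fst p) x * Wt n m (snd p) x * of_int (Gc (fst p) (snd p) c))"
    proof (cases "?cond p")
      case True
      then have E1: "ps v (c - 1) = ps u (c - 1)" and G: "Gc v u c \<noteq> 0" using pv by auto
      note fp = flip_props[OF v u c1 cn E1 G refl]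
      show ?thesis unfolding \<phi>_def pv using True pv fp(5) fp(6)[of m x] by simp
    next
      case False
      then have "Gc (fst p) (snd p) c = 0" unfolding Gc_def by auto
      moreover have "\<phi> p = p" unfolding \<phi>_def using False by (rule if_not_P)
      ultimately show ?thesis by simp
    qed
  qed
qed

lemma main_sum_zero:
  "(\<Sum>v\<in>Alt n i. \<Sum>u\<in>Alt n j. Wt n m v x * Wt n m u x * of_int (Bf n v u)) = 0"
proof -
  have "(\<Sum>v\<in>Alt n i. \<Sum>u\<in>Alt n j. Wt n m v x * Wt n m u x * of_int (Bf n v u))
     = (\<Sum>v\<in>Alt n i. \<Sum>u\<in>Alt n j. \<Sum>c\<in>{1..n}. Wt n m v x * Wt n m u x * of_int (Gc v u c) / 2)"
  proof (intro sum.cong refl)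
    fix v u assume v: "v \<in> Alt n i" and u: "u \<in> Alt n j"
    have sv: "\<forall>b. v b \<noteq> 0 \<longrightarrow> 1 \<le> b \<and> b \<le> n" and su: "\<forall>b. u b \<noteq> 0 \<longrightarrow> 1 \<le> b \<and> b \<le> n"
      using Alt_supp[OF v] Alt_supp[OF u] by auto
    have v0: "v 0 = u 0" using sv su by (metis not_one_le_zero)
    have "2 * Bf n v u = (\<Sum>c\<in>{1..n}. Gc v u c)"
      using Bf_tt[OF sv Alt_pn[OF v] su Alt_pn[OF u]] decomp[of v n u, OF _ v0] Alt_pn[OF v] Alt_pn[OF u] by simp
    then have "real_of_int (2 * Bf n v u) = real_of_int (\<Sum>c\<in>{1..n}. Gc v u c)" by simp
    then have "2 * real_of_int (Bf n v u) = (\<Sum>c\<in>{1..n}. real_of_int (Gc v u c))"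
      by (simp only: of_int_mult of_int_sum of_int_numeral)
    then have "real_of_int (Bf n v u) = (\<Sum>c\<in>{1..n}. real_of_int (Gc v u c)) / 2"
      by simp
    then show "Wt n m v x * Wt n m u x * of_int (Bf n v u) = (\<Sum>c\<in>{1..n}. Wt n m v x * Wt n m u x * of_int (Gc v u c) / 2)"
      by (simp add: sum_distrib_left sum_divide_distrib)
  qed
  also have "\<dots> = (\<Sum>(v, u)\<in>Alt n i \<times> Alt n j. \<Sum>c\<in>{1..n}. Wt n m v x * Wt n m u x * of_int (Gc v u c) / 2)"
    by (rule sum.cartesian_product)
  also have "\<dots> = (\<Sum>p\<in>Alt n i \<times> Alt n j. \<Sum>c\<in>{1..n}. Wt n m (fst p) x * Wt n m (snd p) x * of_int (Gc (fst p) (snd p) c) / 2)"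
    by (simp add: case_prod_unfold)
  also have "\<dots> = (\<Sum>c\<in>{1..n}. \<Sum>p\<in>Alt n i \<times> Alt n j. Wt n m (fst p) x * Wt n m (snd p) x * of_int (Gc (fst p) (snd p) c) / 2)"
    by (rule sum.swap)
  also have "\<dots> = (\<Sum>c\<in>{1..n}. (\<Sum>p\<in>Alt n i \<times> Alt n j. Wt n m (fst p) x * Wt n m (snd p) x * of_int (Gc (fst p) (snd p) c)) / 2)"
    by (simp add: sum_divide_distrib)
  also have "\<dots> = 0"
    using block_zero by (intro sum.neutral) auto
  finally show ?thesis .
qed

theorem theorem4:
  fixes K :: nat and m :: "nat \<Rightarrow> real" and x :: "nat \<Rightarrow> real" and i j :: nat
  assumes "\<forall>l\<in>{1..2 * K}. m l > 0"
    and "\<forall>a b. 1 \<le> a \<longrightarrow> a < b \<longrightarrow> b \<le> 2 * K \<longrightarrow> x a < x b"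
    and "1 \<le> i" "i \<le> K" "1 \<le> j" "j \<le> K"
  shows "pbracket (2 * K) (H K m i) (H K m j) x = 0"
  using pbracket_expand[OF assms(2)] main_sum_zero by simp

end
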